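(* For $(\mu_0^2,\mu_1^2,\mu_\infty^2)\in[0,1)^3$ put $s=\mu_0^2+\mu_1^2+\mu_\infty^2$ and $t=\mu_0^2\mu_1^2+\mu_1^2\mu_\infty^2+\mu_\infty^2\mu_0^2$. The domain in the $(s,t)$-plane of all such points $(s,t)$ is the region bounded by the curves \[ t=\frac{s^2}{3},\quad t=0,\quad t=s-1,\quad t=2s-3, \] (i.e. its closure is $\{(s,t): 0\le s\le 3,\ \max(0,s-1,2s-3)\le t\le s^2/3\}$), and it is divided into two parts by the curve $D=0$, where $D=(s+1)^2-4(t+1)$.
   Context: $D$ equals the discriminant $(\mu_\infty^2+\mu_0^2-\mu_1^2-1)^2-4(1-\mu_0^2)(1-\mu_\infty^2)$ of the numerator $(1-\mu_\infty^2)x^2+(\mu_\infty^2+\mu_0^2-\mu_1^2-1)x+1-\mu_0^2$ of the coefficient $q$ of the SL-form of the hypergeometric equation. *)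

theory Defs
  imports "HOL-Analysis.Analysis"
begin

text \<open>The map (mu0^2, mu1^2, muinf^2) to (s,t); variables a b c stand for the squares.\<close>
definition st_map :: "real \<times> real \<times> real \<Rightarrow> real \<times> real" where
  "st_map = (\<lambda>(a, b, c). (a + b + c, a * b + b * c + c * a))"

definition st_domain :: "(real \<times> real) set" where
  "st_domain = st_map ` ({0..<1} \<times> {0..<1} \<times> {0..<1})"

definition Dst :: "real \<times> real \<Rightarrow> real" where
  "Dst = (\<lambda>(s, t). (s + 1)^2 - 4 * (t + 1))"

end

theory Submission
  imports Defs
begin

lemma st_map_simp: "st_map (a, b, c) = (a + b + c, a * b + b * c + c * a)"
  by (simp add: st_map_def)

lemma wit_open:
  fixes s t :: real
  assumes "0 \<le> s" "0 \<le> t" "t \<le> s^2/3" "t > s - 1" "t > 2 * s - 3" "s < 3"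
  shows "\<exists>a b c. a \<in> {0..<1} \<and> b \<in> {0..<1} \<and> c \<in> {0..<1} \<and> st_map (a,b,c) = (s,t)"
proof (cases "s \<le> 2 \<and> t \<le> s^2/4")
  case True
  define r where "r = sqrt (s^2 - 4 * t)"
  have r0: "r \<ge> 0" and r2: "r^2 = s^2 - 4 * t" using True by (auto simp: r_def)
  have "r^2 \<le> s^2" using r2 assms(2) by linarith
  then have "r \<le> s" using assms(1) by (rule power2_le_imp_le)
  moreover have "r < 2 - s"
  proof (rule power2_less_imp_less)
    have "(2-s)^2 = 4 - 4 * s + s^2" by (simp add: power2_eq_square algebra_simps)
    then show "r^2 < (2-s)^2" using r2 assms by linarith
  qed (use True in linarith)
  moreover have "((s+r)/2) * ((s-r)/2) = t"
  proof -
    have "((s+r)/2) * ((s-r)/2) = (s^2 - r^2)/4" by (simp add: power2_eq_square algebra_simps)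
    then show ?thesis using r2 by simp
  qed
  ultimately have H: "r \<le> s \<and> r < 2 - s \<and> ((s+r)/2) * ((s-r)/2) = t" by blast
  show ?thesis
    apply (rule exI[of _ "(s+r)/2"], rule exI[of _ "(s-r)/2"], rule exI[of _ 0])
    using r0 H by (simp add: st_map_simp field_simps)
next
  case False
  define r where "r = sqrt (s^2 - 3 * t)"
  have r0: "r \<ge> 0" and r2: "r^2 = s^2 - 3 * t" using assms by (auto simp: r_def)
  have t4: "t \<ge> s^2/4"
  proof (cases "s \<le> 2")
    case True then show ?thesis using False by auto
  next
    case F: False
    have "(s-2) * (s-6) \<le> 0" using F assms by (intro mult_nonneg_nonpos) auto
    moreover have "(s-2) * (s-6) = s^2 - 8 * s + 12" by (simp add: power2_eq_square algebra_simps)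
    ultimately show ?thesis using assms by linarith
  qed
  have "2 * r \<le> s"
  proof (rule power2_le_imp_le)
    have "(2 * r)^2 = 4 * r^2" by (simp add: power2_eq_square)
    then show "(2 * r)^2 \<le> s^2" using r2 t4 by linarith
  qed (use assms in linarith)
  moreover have "r < 3 - s"
  proof (rule power2_less_imp_less)
    have "(3-s)^2 = 9 - 6 * s + s^2" by (simp add: power2_eq_square algebra_simps)
    then show "r^2 < (3-s)^2" using r2 assms by linarith
  qed (use assms in linarith)
  moreover have "((s+r)/3) * ((s+r)/3) + (s+r)/3 * (s - 2 * ((s+r)/3)) + (s - 2 * ((s+r)/3)) * ((s+r)/3) = t"
  proof -
    have "((s+r)/3) * ((s+r)/3) + (s+r)/3 * (s - 2 * ((s+r)/3)) + (s - 2 * ((s+r)/3)) * ((s+r)/3) = (s^2 - r^2)/3"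
      by (simp add: power2_eq_square field_simps)
    then show ?thesis using r2 by simp
  qed
  ultimately have H: "2 * r \<le> s \<and> r < 3 - s \<and> ((s+r)/3) * ((s+r)/3) + (s+r)/3 * (s - 2 * ((s+r)/3)) + (s - 2 * ((s+r)/3)) * ((s+r)/3) = t" by blast
  show ?thesis
    apply (rule exI[of _ "(s+r)/3"], rule exI[of _ "(s+r)/3"], rule exI[of _ "s - 2 * ((s+r)/3)"])
    using r0 assms H by (simp add: st_map_simp field_simps)
qed

lemma wit_closed:
  fixes s t :: real
  assumes "0 \<le> s" "0 \<le> t" "t \<le> s^2/3" "t \<ge> s - 1" "t \<ge> 2 * s - 3" "s \<le> 3"
  shows "\<exists>a b c. a \<in> {0..1} \<and> b \<in> {0..1} \<and> c \<in> {0..1} \<and> st_map (a,b,c) = (s,t)"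
proof (cases "s \<le> 2 \<and> t \<le> s^2/4")
  case True
  define r where "r = sqrt (s^2 - 4 * t)"
  have r0: "r \<ge> 0" and r2: "r^2 = s^2 - 4 * t" using True by (auto simp: r_def)
  have "r^2 \<le> s^2" using r2 assms(2) by linarith
  then have "r \<le> s" using assms(1) by (rule power2_le_imp_le)
  moreover have "r \<le> 2 - s"
  proof (rule power2_le_imp_le)
    have "(2-s)^2 = 4 - 4 * s + s^2" by (simp add: power2_eq_square algebra_simps)
    then show "r^2 \<le> (2-s)^2" using r2 assms by linarith
  qed (use True in linarith)
  moreover have "((s+r)/2) * ((s-r)/2) = t"
  proof -
    have "((s+r)/2) * ((s-r)/2) = (s^2 - r^2)/4" by (simp add: power2_eq_square algebra_simps)
    then show ?thesis using r2 by simp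
  qed
  ultimately have H: "r \<le> s \<and> r \<le> 2 - s \<and> ((s+r)/2) * ((s-r)/2) = t" by blast
  show ?thesis
    apply (rule exI[of _ "(s+r)/2"], rule exI[of _ "(s-r)/2"], rule exI[of _ 0])
    using r0 H by (simp add: st_map_simp field_simps)
next
  case False
  define r where "r = sqrt (s^2 - 3 * t)"
  have r0: "r \<ge> 0" and r2: "r^2 = s^2 - 3 * t" using assms by (auto simp: r_def)
  have t4: "t \<ge> s^2/4"
  proof (cases "s \<le> 2")
    case True then show ?thesis using False by auto
  next
    case F: False
    have "(s-2) * (s-6) \<le> 0" using F assms by (intro mult_nonneg_nonpos) auto
    moreover have "(s-2) * (s-6) = s^2 - 8 * s + 12" by (simp add: power2_eq_square algebra_simps)
    ultimately show ?thesis using assms by linarith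
  qed
  have "2 * r \<le> s"
  proof (rule power2_le_imp_le)
    have "(2 * r)^2 = 4 * r^2" by (simp add: power2_eq_square)
    then show "(2 * r)^2 \<le> s^2" using r2 t4 by linarith
  qed (use assms in linarith)
  moreover have "r \<le> 3 - s"
  proof (rule power2_le_imp_le)
    have "(3-s)^2 = 9 - 6 * s + s^2" by (simp add: power2_eq_square algebra_simps)
    then show "r^2 \<le> (3-s)^2" using r2 assms by linarith
  qed (use assms in linarith)
  moreover have "((s+r)/3) * ((s+r)/3) + (s+r)/3 * (s - 2 * ((s+r)/3)) + (s - 2 * ((s+r)/3)) * ((s+r)/3) = t"
  proof -
    have "((s+r)/3) * ((s+r)/3) + (s+r)/3 * (s - 2 * ((s+r)/3)) + (s - 2 * ((s+r)/3)) * ((s+r)/3) = (s^2 - r^2)/3"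
      by (simp add: power2_eq_square field_simps)
    then show ?thesis using r2 by simp
  qed
  ultimately have H: "2 * r \<le> s \<and> r \<le> 3 - s \<and> ((s+r)/3) * ((s+r)/3) + (s+r)/3 * (s - 2 * ((s+r)/3)) + (s - 2 * ((s+r)/3)) * ((s+r)/3) = t" by blast
  show ?thesis
    apply (rule exI[of _ "(s+r)/3"], rule exI[of _ "(s+r)/3"], rule exI[of _ "s - 2 * ((s+r)/3)"])
    using r0 assms H by (simp add: st_map_simp field_simps)
qed


lemma dom_props:
  fixes a b c :: real
  assumes "0 \<le> a" "a \<le> 1" "0 \<le> b" "b \<le> 1" "0 \<le> c" "c \<le> 1"
  shows "0 \<le> a + b + c \<and> a + b + c \<le> 3 \<and> 0 \<le> a * b + b * c + c * a
    \<and> (a + b + c) - 1 \<le> a * b + b * c + c * a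
    \<and> 2 * (a + b + c) - 3 \<le> a * b + b * c + c * a
    \<and> a * b + b * c + c * a \<le> (a + b + c)^2 / 3"
proof -
  define s where "s = a + b + c"
  define t where "t = a * b + b * c + c * a"
  define P where "P = (1-a) * (1-b) * (1-c)"
  define m where "m = a * b * c"
  define Q where "Q = (1-a) * (1-b) + (1-b) * (1-c) + (1-c) * (1-a)"
  define W where "W = (a-b)^2 + (b-c)^2 + (c-a)^2"
  have p1: "0 \<le> P" unfolding P_def using assms by (intro mult_nonneg_nonneg) auto
  have p2: "0 \<le> m" unfolding m_def using assms by (intro mult_nonneg_nonneg) auto
  have e1: "P = 1 - s + t - m" unfolding P_def s_def t_def m_def by (simp add: algebra_simps)
  have p3: "0 \<le> Q" unfolding Q_def using assms by (intro add_nonneg_nonneg mult_nonneg_nonneg) auto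
  have e3: "Q = 3 - 2 * s + t" unfolding Q_def s_def t_def by (simp add: algebra_simps)
  have p4: "0 \<le> t" unfolding t_def using assms by (intro add_nonneg_nonneg mult_nonneg_nonneg) auto
  have p5: "0 \<le> W" unfolding W_def by simp
  have e5: "W = 2 * s^2 - 6 * t" unfolding W_def s_def t_def by (simp add: power2_eq_square algebra_simps)
  have "0 \<le> s" "s \<le> 3" using assms unfolding s_def by linarith+
  moreover have "s - 1 \<le> t" using p1 p2 e1 by linarith
  moreover have "2 * s - 3 \<le> t" using p3 e3 by linarith
  moreover have "3 * t \<le> s^2" using p5 e5 by linarith
  then have "t \<le> s^2 / 3" by (simp add: field_simps)
  ultimately show ?thesis using p4 unfolding s_def t_def by blast
qed

lemma dom_strict:
  fixes a b c :: real
  assumes "0 \<le> a" "a < 1" "0 \<le> b" "b < 1" "0 \<le> c" "c < 1"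
  shows "a + b + c < 3 \<and> (a + b + c) - 1 < a * b + b * c + c * a
    \<and> 2 * (a + b + c) - 3 < a * b + b * c + c * a"
proof -
  define s where "s = a + b + c"
  define t where "t = a * b + b * c + c * a"
  define P where "P = (1-a) * (1-b) * (1-c)"
  define m where "m = a * b * c"
  define Q where "Q = (1-a) * (1-b) + (1-b) * (1-c) + (1-c) * (1-a)"
  have p1: "0 < P" unfolding P_def using assms by (intro mult_pos_pos) auto
  have p2: "0 \<le> m" unfolding m_def using assms by (intro mult_nonneg_nonneg) auto
  have e1: "P = 1 - s + t - m" unfolding P_def s_def t_def m_def by (simp add: algebra_simps)
  have p3: "0 < Q" unfolding Q_def using assms by (intro add_pos_nonneg mult_pos_pos mult_nonneg_nonneg) auto
  have e3: "Q = 3 - 2 * s + t" unfolding Q_def s_def t_def by (simp add: algebra_simps)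
  have "s < 3" using assms unfolding s_def by linarith
  moreover have "s - 1 < t" using p1 p2 e1 by linarith
  moreover have "2 * s - 3 < t" using p3 e3 by linarith
  ultimately show ?thesis unfolding s_def t_def by blast
qed

lemma neg_scale:
  fixes a b c u :: real
  assumes "0 \<le> a" "a < 1" "0 \<le> b" "b < 1" "0 \<le> c" "c < 1" "0 \<le> u" "u \<le> 1"
    and neg: "(a + b + c + 1)^2 - 4 * (a * b + b * c + c * a + 1) < 0"
  shows "(u*a + u*b + u*c + 1)^2 - 4 * ((u*a) * (u*b) + (u*b) * (u*c) + (u*c) * (u*a) + 1) < 0"
proof -
  define l where "l = a + b + c"
  define E where "E = (a + b + c + 1)^2 - 4 * (a * b + b * c + c * a + 1)"
  define F where "F = (u*a + u*b + u*c + 1)^2 - 4 * ((u*a) * (u*b) + (u*b) * (u*c) + (u*c) * (u*a) + 1)"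
  define G where "G = 2 * (u * l) - 3 - 3 * u"
  have key: "F = u^2 * E + (1 - u) * G"
    unfolding F_def E_def l_def G_def by (simp add: power2_eq_square algebra_simps)
  have l3: "l < 3" using assms by (simp add: l_def)
  have "u * l \<le> u * 3" using l3 assms by (intro mult_left_mono) auto
  then have "u * l \<le> 3 * u" by (simp add: mult.commute)
  then have "G \<le> 0" using assms(8) unfolding G_def by linarith
  then have X: "(1 - u) * G \<le> 0" using assms by (intro mult_nonneg_nonpos) auto
  have E0: "E < 0" using neg by (simp add: E_def)
  show ?thesis
  proof (cases "u = 0")
    case True then show ?thesis by simp
  next
    case False
    then have "u^2 * E < 0" using E0 by (intro mult_pos_neg) auto
    then have "F < 0" using key X by linarith
    then show ?thesis unfolding F_def .
  qed
qed

lemma two_components: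
  fixes S U V :: "'a::topological_space set"
  assumes oU: "open U" and oV: "open V" and UV: "U \<inter> V = {}" and SUV: "S \<subseteq> U \<union> V"
    and neA: "S \<inter> U \<noteq> {}" and neB: "S \<inter> V \<noteq> {}"
    and cA: "connected (S \<inter> U)" and cB: "connected (S \<inter> V)"
  shows "components S = {S \<inter> U, S \<inter> V}"
proof -
  have sep: "U \<inter> D = {} \<or> V \<inter> D = {}" if "D \<subseteq> S" "connected D" for D
  proof (rule connectedD[OF that(2) oU oV])
    show "U \<inter> V \<inter> D = {}" using UV by blast
    show "D \<subseteq> U \<union> V" using that(1) SUV by blast
  qed
  have Acomp: "S \<inter> U \<in> components S"
    unfolding in_components_maximal
  proof (intro conjI allI impI)
    fix D assume D: "D \<noteq> {} \<and> S \<inter> U \<subseteq> D \<and> D \<subseteq> S \<and> connected D"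
    then have "U \<inter> D = {} \<or> V \<inter> D = {}" using sep by blast
    moreover have "U \<inter> D \<noteq> {}" using D neA by blast
    ultimately have "V \<inter> D = {}" by blast
    then show "D = S \<inter> U" using D SUV by blast
  qed (use neA cA in auto)
  have Bcomp: "S \<inter> V \<in> components S"
    unfolding in_components_maximal
  proof (intro conjI allI impI)
    fix D assume D: "D \<noteq> {} \<and> S \<inter> V \<subseteq> D \<and> D \<subseteq> S \<and> connected D"
    then have "U \<inter> D = {} \<or> V \<inter> D = {}" using sep by blast
    moreover have "V \<inter> D \<noteq> {}" using D neB by blast
    ultimately have "U \<inter> D = {}" by blast
    then show "D = S \<inter> V" using D SUV by blast
  qed (use neB cB in auto)
  show ?thesis
  proof
    show "{S \<inter> U, S \<inter> V} \<subseteq> components S" using Acomp Bcomp by simp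
    show "components S \<subseteq> {S \<inter> U, S \<inter> V}"
    proof
      fix C assume C: "C \<in> components S"
      then have Cp: "C \<noteq> {}" "C \<subseteq> S" "connected C" by (auto simp: in_components_maximal)
      then have "U \<inter> C = {} \<or> V \<inter> C = {}" using sep by blast
      then have "C \<inter> (S \<inter> U) \<noteq> {} \<or> C \<inter> (S \<inter> V) \<noteq> {}" using Cp SUV by blast
      then show "C \<in> {S \<inter> U, S \<inter> V}"
        using components_nonoverlap[OF C Acomp] components_nonoverlap[OF C Bcomp] by blast
    qed
  qed
qed

lemma st_map_cont: "continuous_on X st_map"
proof -
  have eq: "st_map = (\<lambda>x. (fst x + fst (snd x) + snd (snd x),
      fst x * fst (snd x) + fst (snd x) * snd (snd x) + snd (snd x) * fst x))"
    by (auto simp: st_map_def fun_eq_iff split: prod.splits)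
  show ?thesis unfolding eq by (intro continuous_intros)
qed

lemma Dst_cont: "continuous_on X Dst"
proof -
  have eq: "Dst = (\<lambda>p. (fst p + 1)^2 - 4 * (snd p + 1))"
    by (auto simp: Dst_def fun_eq_iff split: prod.splits)
  show ?thesis unfolding eq by (intro continuous_intros)
qed

lemma part1:
  "closure st_domain =
     {(s, t). 0 \<le> s \<and> s \<le> 3 \<and> max 0 (max (s - 1) (2 * s - 3)) \<le> t \<and> t \<le> s^2 / 3}"
  (is "_ = ?R")
proof
  show "closure st_domain \<subseteq> ?R"
  proof (rule closure_minimal)
    show "st_domain \<subseteq> ?R"
    proof
      fix p assume "p \<in> st_domain"
      then obtain a b c where abc: "a \<in> {0..<1}" "b \<in> {0..<1}" "c \<in> {0..<1}" and p: "p = st_map (a,b,c)"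
        by (auto simp: st_domain_def)
      have "0 \<le> a" "a \<le> 1" "0 \<le> b" "b \<le> 1" "0 \<le> c" "c \<le> 1" using abc by auto
      from dom_props[OF this] show "p \<in> ?R" by (simp add: p st_map_simp)
    qed
    have "?R = {p. 0 \<le> fst p \<and> fst p \<le> 3 \<and> max 0 (max (fst p - 1) (2 * fst p - 3)) \<le> snd p
                 \<and> snd p \<le> (fst p)^2 / 3}" by auto
    moreover have "closed {p::real\<times>real. 0 \<le> fst p \<and> fst p \<le> 3 \<and> max 0 (max (fst p - 1) (2 * fst p - 3)) \<le> snd p
                 \<and> snd p \<le> (fst p)^2 / 3}"
      by (intro closed_Collect_conj closed_Collect_le continuous_intros) auto
    ultimately show "closed ?R" by simp
  qed
  show "?R \<subseteq> closure st_domain"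
  proof
    fix p assume "p \<in> ?R"
    then obtain s t where p: "p = (s,t)" and st: "0 \<le> s" "s \<le> 3" "0 \<le> t" "s - 1 \<le> t" "2 * s - 3 \<le> t" "t \<le> s^2/3"
      by auto
    obtain a b c where abc: "a \<in> {0..1}" "b \<in> {0..1}" "c \<in> {0..1}" "st_map (a,b,c) = (s,t)"
      using wit_closed[OF st(1,3,6,4,5,2)] by blast
    have cl: "closure ({0..<(1::real)} \<times> {0..<(1::real)} \<times> {0..<(1::real)}) = {0..1} \<times> {0..1} \<times> {0..1}"
      by (simp add: closure_Times)
    have "st_map ` closure ({0..<(1::real)} \<times> {0..<(1::real)} \<times> {0..<(1::real)}) \<subseteq> closure st_domain"
      by (rule image_closure_subset) (auto simp: st_map_cont st_domain_def intro: closure_subset[THEN subsetD])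
    then show "p \<in> closure st_domain" using abc unfolding cl p by force
  qed
qed

lemma Nconn:
  "connected {x \<in> {0..<1} \<times> {0..<1} \<times> {0..<(1::real)}. Dst (st_map x) < 0}" (is "connected ?N")
proof (rule starlike_imp_connected)
  show "starlike ?N" unfolding starlike_def
  proof (rule bexI[of _ "(0,0,0)"], intro ballI subsetI)
    show "(0,0,0) \<in> ?N" by (simp add: Dst_def st_map_simp)
    fix x y assume x: "x \<in> ?N" and y: "y \<in> closed_segment (0,0,0) x"
    obtain a b c where xe: "x = (a,b,c)" by (cases x) auto
    obtain u where u: "0 \<le> u" "u \<le> 1" "y = (0,0,0) + u *\<^sub>R x" using y by (auto simp: in_segment)
    have ye: "y = (u*a, u*b, u*c)" using u(3) xe by simp
    have abc: "0 \<le> a" "a < 1" "0 \<le> b" "b < 1" "0 \<le> c" "c < 1" using x xe by auto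
    have neg: "(a + b + c + 1)^2 - 4 * (a * b + b * c + c * a + 1) < 0"
      using x xe by (simp add: Dst_def st_map_simp)
    have "(u*a + u*b + u*c + 1)^2 - 4 * ((u*a) * (u*b) + (u*b) * (u*c) + (u*c) * (u*a) + 1) < 0"
      by (rule neg_scale[OF abc u(1,2) neg])
    moreover have "u*a \<le> a" "u*b \<le> b" "u*c \<le> c" using abc u by (auto intro: mult_left_le_one_le)
    moreover have "0 \<le> u*a" "0 \<le> u*b" "0 \<le> u*c" using abc u by auto
    ultimately show "y \<in> ?N" using abc unfolding ye by (simp add: Dst_def st_map_simp)
  qed
qed

lemma part2: "card (components (st_domain - {p. Dst p = 0})) = 2"
proof -
  define S where "S = st_domain - {p. Dst p = 0}"
  define U where "U = {p. Dst p < 0}"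
  define V where "V = {p::real\<times>real. 0 < Dst p}"
  define N where "N = {x \<in> {0..<1} \<times> {0..<1} \<times> {0..<(1::real)}. Dst (st_map x) < 0}"
  define lo where "lo = (\<lambda>s::real. max 0 (max (s - 1) (2 * s - 3)))"
  define hi where "hi = (\<lambda>s::real. ((s + 1)^2 - 4) / 4)"
  define phi where "phi = (\<lambda>x::real\<times>real. (fst x, max 0 (max (fst x - 1) (2 * fst x - 3))
      + snd x * (((fst x + 1)^2 - 4) / 4 - max 0 (max (fst x - 1) (2 * fst x - 3)))))"
  define I where "I = {1<..<(3::real)} \<times> {0<..<(1::real)}"
  have oU: "open U" unfolding U_def by (intro open_Collect_less Dst_cont continuous_intros)
  have oV: "open V" unfolding V_def by (intro open_Collect_less Dst_cont continuous_intros)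
  have UV: "U \<inter> V = {}" by (auto simp: U_def V_def)
  have SUV: "S \<subseteq> U \<union> V" by (auto simp: S_def U_def V_def)
  have SU: "S \<inter> U = st_map ` N"
    by (auto simp: S_def U_def N_def st_domain_def)
  have cA: "connected (S \<inter> U)" unfolding SU N_def
    by (rule connected_continuous_image[OF st_map_cont Nconn])
  have z: "st_map (0,0,0) = (0,0)" by (simp add: st_map_simp)
  have neA: "S \<inter> U \<noteq> {}"
  proof -
    have "(0,0,0) \<in> N" by (simp add: N_def Dst_def st_map_simp)
    then show ?thesis unfolding SU by blast
  qed
  have neB: "S \<inter> V \<noteq> {}"
  proof -
    have "st_map (9/10, 9/10, 0) \<in> st_domain" unfolding st_domain_def by (rule imageI) auto
    moreover have "Dst (st_map (9/10, 9/10, 0)) > 0" by (simp add: Dst_def st_map_simp power2_eq_square)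
    ultimately show ?thesis by (auto simp: S_def V_def)
  qed
  have SV: "S \<inter> V = phi ` I"
  proof
    show "S \<inter> V \<subseteq> phi ` I"
    proof
      fix p assume p: "p \<in> S \<inter> V"
      then obtain a b c where abc: "a \<in> {0..<1}" "b \<in> {0..<1}" "c \<in> {0..<1}" and pe: "p = st_map (a,b,c)"
        by (auto simp: S_def st_domain_def)
      define s where "s = a + b + c"
      define t where "t = a * b + b * c + c * a"
      have pst: "p = (s,t)" by (simp add: pe st_map_simp s_def t_def)
      have "0 \<le> a" "a \<le> 1" "0 \<le> b" "b \<le> 1" "0 \<le> c" "c \<le> 1" using abc by auto
      from dom_props[OF this] have w: "0 \<le> s" "0 \<le> t" unfolding s_def t_def by auto
      have "0 \<le> a" "a < 1" "0 \<le> b" "b < 1" "0 \<le> c" "c < 1" using abc by auto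
      from dom_strict[OF this] have st: "s < 3" "s - 1 < t" "2 * s - 3 < t" unfolding s_def t_def by auto
      have D: "4 * t + 4 < (s + 1)^2" using p by (simp add: V_def pst Dst_def algebra_simps)
      have fac: "(s + 1)^2 = (s - 1) * (s + 3) + 4" by (simp add: power2_eq_square algebra_simps)
      have s1: "1 < s"
      proof (rule ccontr)
        assume "\<not> 1 < s"
        then have "(s - 1) * (s + 3) \<le> 0" using w by (intro mult_nonpos_nonneg) auto
        then show False using D fac w by linarith
      qed
      have tlo: "lo s < t" using st s1 by (simp add: lo_def)
      have thi: "t < hi s" using D by (simp add: hi_def)
      define l where "l = (t - lo s) / (hi s - lo s)"
      have l0: "0 < l" using tlo thi by (simp add: l_def)
      have l1: "l < 1" using tlo thi by (simp add: l_def)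
      have "phi (s, l) = (s, lo s + l * (hi s - lo s))" by (simp add: phi_def lo_def hi_def)
      also have "lo s + l * (hi s - lo s) = t" using tlo thi by (simp add: l_def)
      finally have "phi (s, l) = p" by (simp add: pst)
      moreover have "(s, l) \<in> I" using s1 st l0 l1 by (simp add: I_def)
      ultimately show "p \<in> phi ` I" by (metis imageI)
    qed
    show "phi ` I \<subseteq> S \<inter> V"
    proof
      fix p assume "p \<in> phi ` I"
      then obtain s l where sl: "1 < s" "s < 3" "0 < l" "l < 1" and pe: "p = phi (s, l)"
        by (auto simp: I_def)
      define t where "t = lo s + l * (hi s - lo s)"
      have pst: "p = (s, t)" by (simp add: pe phi_def t_def lo_def hi_def)
      have fac: "(s + 1)^2 - 4 = (s - 1) * (s + 3)" by (simp add: power2_eq_square algebra_simps)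
      have "0 < (s - 1) * (s + 3)" using sl by (intro mult_pos_pos) auto
      then have "4 * 0 < (s + 1)^2 - 4" using fac by simp
      then have h1: "0 < hi s" unfolding hi_def by (simp only: pos_less_divide_eq)
      have f2: "(s + 1)^2 = (s - 1)^2 + 4 * s" by (simp add: power2_eq_square algebra_simps)
      have "0 < (s - 1)^2" using sl by simp
      then have "4 * s - 4 < (s + 1)^2 - 4" using f2 by linarith
      then have "4 * (s - 1) < (s + 1)^2 - 4" by (simp add: algebra_simps)
      then have h2: "s - 1 < hi s" unfolding hi_def by (simp add: pos_less_divide_eq)
      have f3: "(s + 1)^2 = (s - 3)^2 + 8 * s - 8" by (simp add: power2_eq_square algebra_simps)
      have "0 < (s - 3)^2" using sl by simp
      then have "8 * s - 12 < (s + 1)^2 - 4" using f3 by linarith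
      then have "4 * (2 * s - 3) < (s + 1)^2 - 4" by (simp add: algebra_simps)
      then have h3: "2 * s - 3 < hi s" unfolding hi_def by (simp add: pos_less_divide_eq)
      have lohi: "lo s < hi s" using h1 h2 h3 by (simp add: lo_def)
      have "0 < l * (hi s - lo s)" using sl lohi by (intro mult_pos_pos) auto
      then have tlo: "lo s < t" by (simp add: t_def)
      have "l * (hi s - lo s) < 1 * (hi s - lo s)" using sl lohi by (intro mult_strict_right_mono) auto
      then have thi: "t < hi s" by (simp add: t_def)
      have t0: "0 \<le> t" "s - 1 < t" "2 * s - 3 < t" using tlo by (auto simp: lo_def)
      have f4: "4 * s^2 - 3 * ((s + 1)^2 - 4) = (s - 3)^2" by (simp add: power2_eq_square algebra_simps)
      have "0 \<le> (s - 3)^2" by simp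
      then have "hi s \<le> s^2 / 3" using f4 by (simp add: hi_def field_simps)
      then have t3: "t \<le> s^2 / 3" using thi by linarith
      obtain a b c where abc: "a \<in> {0..<1}" "b \<in> {0..<1}" "c \<in> {0..<1}" "st_map (a,b,c) = (s,t)"
        using wit_open[OF _ t0(1) t3 t0(2) t0(3) sl(2)] sl by auto
      have "(s, t) \<in> st_domain" unfolding st_domain_def using abc by (metis SigmaI imageI)
      moreover have "0 < Dst (s, t)" using thi by (simp add: Dst_def hi_def)
      ultimately show "p \<in> S \<inter> V" by (simp add: pst S_def V_def)
    qed
  qed
  have cont_phi: "continuous_on I phi" unfolding phi_def by (intro continuous_intros) auto
  have cB: "connected (S \<inter> V)" unfolding SV
    by (rule connected_continuous_image[OF cont_phi]) (simp add: I_def connected_Times)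
  have comps: "components S = {S \<inter> U, S \<inter> V}"
    by (rule two_components[OF oU oV UV SUV neA neB cA cB])
  have "S \<inter> U \<noteq> S \<inter> V" using UV neA by blast
  then show ?thesis using comps by (simp add: S_def)
qed

theorem lemma2p4:
  shows "closure st_domain =
           {(s, t). 0 \<le> s \<and> s \<le> 3 \<and> max 0 (max (s - 1) (2 * s - 3)) \<le> t \<and> t \<le> s^2 / 3}
         \<and> card (components (st_domain - {p. Dst p = 0})) = 2"
  using part1 part2 by blast

end
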